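(* Let $V:S^1\to\mathbb R$ be continuous and odd, and for $D\ge0$ let $c_k=-(2\pi k)^2D+4\pi k v_k$ with $v_k=\int_0^{1/2}V(\theta)\sin(2\pi k\theta)\,d\theta$. (a) If $V>0$ on $\left]0,\tfrac12\right[$, then $c_1>0$ for all sufficiently small $D\ge 0$. (b) Suppose there is $\theta_0\in\left]0,\tfrac12\right[$ such that $V>0$ on $\left]0,\theta_0\right[$, $V(\theta_0)=0$, $V<0$ on $\left]\theta_0,\tfrac12\right[$, and $V(\theta)\ge V(\tfrac12-\theta)$ for all $\theta\in\left]\min(\theta_0,\tfrac12-\theta_0),\tfrac14\right[$. Then $c_2>0$ for all sufficiently small $D\ge0$.
   Context: $S^1=\mathbb R/\mathbb Z$; a function on $S^1$ is identified with a 1-periodic function on $\mathbb R$. The numbers $c_k$ are the eigenvalues of the linearization of the equation $\partial_t f=D\partial_\theta^2 f+\partial_\theta((V*f)f)$, $(V*f)(\theta)=\int_{S^1}V(\theta-\psi)f(\psi)d\psi$, around the constant solution $f\equiv1$. *)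

theory Defs
  imports "HOL-Analysis.Analysis"
begin

text \<open>Functions on the circle R/Z are represented as 1-periodic functions on R.\<close>

definition vcoef :: "(real \<Rightarrow> real) \<Rightarrow> nat \<Rightarrow> real" where
  "vcoef V k = integral {0..1/2} (\<lambda>\<theta>. V \<theta> * sin (2 * pi * real k * \<theta>))"

definition ccoef :: "(real \<Rightarrow> real) \<Rightarrow> real \<Rightarrow> nat \<Rightarrow> real" where
  "ccoef V D k = - ((2 * pi * real k)^2) * D + 4 * pi * real k * vcoef V k"

end

theory Submission
  imports Defs
begin

lemma integral_pos_cont:
  fixes f :: "real \<Rightarrow> real"
  assumes ab: "a < b" and c: "continuous_on {a..b} f"
    and nn: "\<And>x. x \<in> {a..b} \<Longrightarrow> 0 \<le> f x"
    and x: "x \<in> {a..b}" and px: "f x > 0"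
  shows "integral {a..b} f > 0"
proof -
  have int: "f integrable_on {a..b}" using c integrable_continuous_real by blast
  have ge: "integral {a..b} f \<ge> 0" using int nn by (intro integral_nonneg) auto
  show ?thesis
  proof (rule ccontr)
    assume "\<not> ?thesis"
    with ge have "integral {a..b} f = 0" by simp
    with int have h: "(f has_integral 0) (cbox a b)" by (metis has_integral_integral box_real(2))
    have "f x = 0"
      by (rule has_integral_0_cbox_imp_0[OF _ _ h]) (use c nn x ab in auto)
    with px show False by simp
  qed
qed

lemma ccoef_pos:
  assumes "vcoef V k > 0" and "k > 0"
  shows "\<exists>\<epsilon>>0. \<forall>D. 0 \<le> D \<and> D < \<epsilon> \<longrightarrow> ccoef V D k > 0"
proof -
  define A where "A = (2 * pi * real k)^2"
  define B where "B = 4 * pi * real k * vcoef V k"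
  have A: "A > 0" using assms by (simp add: A_def)
  have B: "B > 0" using assms by (simp add: B_def)
  show ?thesis
  proof (intro exI[of _ "B / A"] conjI allI impI)
    show "B / A > 0" using A B by simp
    fix D assume "0 \<le> D \<and> D < B / A"
    then have "A * D < B" using A by (simp add: pos_less_divide_eq mult.commute)
    then show "ccoef V D k > 0" unfolding ccoef_def A_def B_def by simp
  qed
qed

theorem mainTheorem3:
  fixes V :: "real \<Rightarrow> real"
  assumes cont: "continuous_on UNIV V"
    and per: "\<And>\<theta>. V (\<theta> + 1) = V \<theta>"
    and odd: "\<And>\<theta>. V (- \<theta>) = - V \<theta>"
  shows "((\<forall>\<theta>\<in>{0<..<1/2}. V \<theta> > 0) \<longrightarrow>
            (\<exists>\<epsilon>>0. \<forall>D. 0 \<le> D \<and> D < \<epsilon> \<longrightarrow> ccoef V D 1 > 0))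
       \<and> ((\<exists>\<theta>0\<in>{0<..<1/2}.
              (\<forall>\<theta>\<in>{0<..<\<theta>0}. V \<theta> > 0) \<and> V \<theta>0 = 0 \<and>
              (\<forall>\<theta>\<in>{\<theta>0<..<1/2}. V \<theta> < 0) \<and>
              (\<forall>\<theta>\<in>{min \<theta>0 (1/2 - \<theta>0)<..<1/4}. V \<theta> \<ge> V (1/2 - \<theta>)))
          \<longrightarrow> (\<exists>\<epsilon>>0. \<forall>D. 0 \<le> D \<and> D < \<epsilon> \<longrightarrow> ccoef V D 2 > 0))"
proof (intro conjI impI)
  have cV: "continuous_on S V" for S using cont continuous_on_subset by blast
  {
    assume pos: "\<forall>\<theta>\<in>{0<..<1/2}. V \<theta> > 0"
    have "vcoef V 1 > 0" unfolding vcoef_def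
    proof (rule integral_pos_cont[where x="1/4"])
      show "continuous_on {0..1/2} (\<lambda>\<theta>. V \<theta> * sin (2 * pi * real 1 * \<theta>))"
        by (intro continuous_intros cV)
      fix x :: real assume x: "x \<in> {0..1/2}"
      have s: "sin (2 * pi * x) \<ge> 0" using x by (intro sin_ge_zero) auto
      have "V x \<ge> 0"
      proof (cases "x = 0 \<or> x = 1/2")
        case True
        have "V 0 = 0" using odd[of 0] by simp
        moreover have "V (1/2) = 0" using odd[of "1/2"] per[of "-1/2"] by simp
        ultimately show ?thesis using True by (metis order_refl)
      next
        case False then have "x \<in> {0<..<1/2}" using x by auto
        then show ?thesis using pos by (simp add: less_imp_le)
      qed
      then show "0 \<le> V x * sin (2 * pi * real 1 * x)" using s by simp
    next
      have "V (1/4) > 0" using pos by simp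
      moreover have "sin (2 * pi * (1/4)) = 1" by simp
      ultimately show "V (1/4) * sin (2 * pi * real 1 * (1/4)) > 0" by simp
    qed auto
    then show "\<exists>\<epsilon>>0. \<forall>D. 0 \<le> D \<and> D < \<epsilon> \<longrightarrow> ccoef V D 1 > 0"
      by (rule ccoef_pos) simp
  }
  {
    assume "\<exists>\<theta>0\<in>{0<..<1/2}.
              (\<forall>\<theta>\<in>{0<..<\<theta>0}. V \<theta> > 0) \<and> V \<theta>0 = 0 \<and>
              (\<forall>\<theta>\<in>{\<theta>0<..<1/2}. V \<theta> < 0) \<and>
              (\<forall>\<theta>\<in>{min \<theta>0 (1/2 - \<theta>0)<..<1/4}. V \<theta> \<ge> V (1/2 - \<theta>))"
    then obtain t where t: "0 < t" "t < 1/2" and p1: "\<forall>\<theta>\<in>{0<..<t}. V \<theta> > 0"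
      and p0: "V t = 0" and p2: "\<forall>\<theta>\<in>{t<..<1/2}. V \<theta> < 0"
      and p3: "\<forall>\<theta>\<in>{min t (1/2 - t)<..<1/4}. V \<theta> \<ge> V (1/2 - \<theta>)" by auto
    define h where "h = (\<lambda>\<theta>. V \<theta> * sin (2 * pi * real 2 * \<theta>))"
    define g where "g = (\<lambda>\<theta>. (V \<theta> - V (1/2 - \<theta>)) * sin (4 * pi * \<theta>))"
    have ch: "continuous_on S h" for S unfolding h_def by (intro continuous_intros cV)
    have split: "integral {0..1/2} h = integral {0..1/4} h + integral {1/4..1/2} h"
      using Henstock_Kurzweil_Integration.integral_combine[where a=0 and c="1/4" and b="1/2" and f=h]
        integrable_continuous_real[OF ch[of "{0..1/2}"]] by simp
    have refl: "integral {1/4..1/2} h = integral {0..1/4} (\<lambda>x. h (1/2 - x))"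
    proof -
      have "integral {1/4..1/2} h = integral {-(1/2)..-(1/4)} (\<lambda>x. h (-x))"
        by (rule Henstock_Kurzweil_Integration.integral_reflect_real[symmetric])
      also have "\<dots> = integral {0 + (-1/2)..1/4 + (-1/2)} (\<lambda>x. h (-x))" by simp
      also have "\<dots> = integral {0..1/4} ((\<lambda>x. h (-x)) \<circ> (+) (-1/2))"
        by (rule integral_shift_Icc_real[symmetric])
      also have "\<dots> = integral {0..1/4} (\<lambda>x. h (1/2 - x))" by (simp add: o_def)
      finally show ?thesis .
    qed
    have "integral {0..1/4} h + integral {0..1/4} (\<lambda>x. h (1/2 - x))
          = integral {0..1/4} (\<lambda>x. h x + h (1/2 - x))"
      by (rule integral_add[symmetric])
        (auto intro!: integrable_continuous_real continuous_intros ch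
           continuous_on_compose2[OF ch[of UNIV]])
    also have "(\<lambda>x. h x + h (1/2 - x)) = g"
    proof
      fix x
      have "sin (2 * pi * 2 * (1/2 - x)) = - sin (4 * pi * x)"
      proof -
        have "2 * pi * 2 * (1/2 - x) = - (4 * pi * x) + 2 * pi" by (simp add: algebra_simps)
        then show ?thesis by simp
      qed
      then show "h x + h (1/2 - x) = g x" unfolding h_def g_def
        by (simp add: algebra_simps)
    qed
    finally have veq: "vcoef V 2 = integral {0..1/4} g"
      unfolding vcoef_def using split refl by (simp add: h_def)
    define m where "m = min t (1/2 - t)"
    have m: "0 < m" "m \<le> 1/4" "m \<le> t" "1/2 - m \<ge> t" using t unfolding m_def by (auto simp: min_def)
    have key: "V x - V (1/2 - x) > 0" if "0 < x" "x < m" for x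
    proof -
      have "V x > 0" using p1 that m by auto
      moreover have "V (1/2 - x) \<le> 0"
      proof (cases "1/2 - x = t")
        case True then show ?thesis using p0 by simp
      next
        case False
        have "1/2 - x \<in> {t<..<1/2}" using False that m by auto
        then show ?thesis using p2 by (meson less_imp_le)
      qed
      ultimately show ?thesis by simp
    qed
    have "vcoef V 2 > 0" unfolding veq
    proof (rule integral_pos_cont[where x="m/2"])
      show "continuous_on {0..1/4} g" unfolding g_def
        by (intro continuous_intros cV continuous_on_compose2[OF cV[of UNIV]]) auto
      fix x :: real assume x: "x \<in> {0..1/4}"
      have s: "sin (4 * pi * x) \<ge> 0" using x by (intro sin_ge_zero) auto
      have "V x - V (1/2 - x) \<ge> 0"
      proof -
        consider "x = 0" | "0 < x \<and> x < m" | "x = m" | "m < x \<and> x < 1/4" | "x = 1/4"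
          using x by force
        then show ?thesis
        proof cases
          case 1
          have "V 0 = 0" using odd[of 0] by simp
          moreover have "V (1/2) = 0" using odd[of "1/2"] per[of "-1/2"] by simp
          ultimately show ?thesis using 1 by simp
        next
          case 2 then show ?thesis using key by fastforce
        next
          case 3
          have c1: "continuous_on {0..m} (\<lambda>x. V x - V (1/2 - x))"
            by (intro continuous_intros cV continuous_on_compose2[OF cV[of UNIV]]) auto
          have "(\<lambda>x. V x - V (1/2 - x)) m \<ge> 0"
          proof -
            have A: "continuous_on (closure {0<..<m}) (\<lambda>x. V x - V (1/2 - x))" using c1 m by simp
            have B: "m \<in> closure {0<..<m}" using m by simp
            have C: "\<And>x. x \<in> {0<..<m} \<Longrightarrow> 0 \<le> (\<lambda>x. V x - V (1/2 - x)) x"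
              using key by (simp add: less_imp_le)
            show ?thesis by (rule continuous_ge_on_closure[OF A B C])
          qed
          then show ?thesis using 3 by simp
        next
          case 4 then show ?thesis using p3 by (auto simp: m_def)
        next
          case 5
          have "1/2 - x = x" using 5 by simp
          then show ?thesis by (metis diff_self order_refl)
        qed
      qed
      then show "0 \<le> g x" unfolding g_def using s by simp
    next
      have "V (m/2) - V (1/2 - m/2) > 0" using key m by simp
      moreover have "sin (4 * pi * (m/2)) > 0" using m by (intro sin_gt_zero) auto
      ultimately show "g (m/2) > 0" unfolding g_def by simp
    qed (use m in auto)
    then show "\<exists>\<epsilon>>0. \<forall>D. 0 \<le> D \<and> D < \<epsilon> \<longrightarrow> ccoef V D 2 > 0"
      by (rule ccoef_pos) simp
  }
qed

end
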